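(* Let $X$ be a set strongly star Hurewicz space and $Y$ a compact space such that $X\times Y$ is $T_1$ and $|X\times Y|<\mathfrak b$. Then $X\times Y$ is set strongly star Hurewicz.
   Context: For a family $\mathcal U$ of subsets of $Z$ and $A\subseteq Z$, $st(A,\mathcal U)=\bigcup\{U\in\mathcal U: U\cap A\neq\emptyset\}$. $Z$ is set strongly star Hurewicz if for every nonempty $A\subseteq Z$ and every sequence $(\mathcal U_n:n\in\omega)$ of families of open subsets of $Z$ with $\overline A\subseteq\bigcup\mathcal U_n$ for all $n$, there are finite $F_n\subseteq\overline A$ such that each $x\in A$ lies in $st(F_n,\mathcal U_n)$ for all but finitely many $n$. $\mathfrak b$ is the minimal cardinality of a $\leq^*$-unbounded subset of $\omega^\omega$. *)

theory Defs
  imports "HOL-Analysis.Analysis" "HOL-Library.Equipollence"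
begin

definition star_of :: "'a set \<Rightarrow> 'a set set \<Rightarrow> 'a set" where
  "star_of A \<U> = \<Union>{U \<in> \<U>. U \<inter> A \<noteq> {}}"

definition set_strongly_star_hurewicz :: "'a topology \<Rightarrow> bool" where
  "set_strongly_star_hurewicz Z \<longleftrightarrow>
     (\<forall>A \<U>. A \<noteq> {} \<and> A \<subseteq> topspace Z \<and>
        (\<forall>n::nat. (\<forall>U\<in>\<U> n. openin Z U) \<and> Z closure_of A \<subseteq> \<Union>(\<U> n)) \<longrightarrow>
        (\<exists>F. (\<forall>n. finite (F n) \<and> F n \<subseteq> Z closure_of A) \<and>
             (\<forall>x\<in>A. \<forall>\<^sub>F n in sequentially. x \<in> star_of (F n) (\<U> n))))"

definition le_star_bounded :: "(nat \<Rightarrow> nat) set \<Rightarrow> bool" where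
  "le_star_bounded F \<longleftrightarrow> (\<exists>g. \<forall>f\<in>F. \<forall>\<^sub>F n in sequentially. f n \<le> g n)"

text \<open>|S| < b: every family in nat^nat of cardinality at most |S| is bounded.\<close>
definition card_less_b :: "'a set \<Rightarrow> bool" where
  "card_less_b S \<longleftrightarrow> (\<forall>F::(nat \<Rightarrow> nat) set. F \<lesssim> S \<longrightarrow> le_star_bounded F)"

end

theory Submission
  imports Defs
begin


lemma diag_lemma:
  fixes Z :: "'a topology"
  assumes cb: "card_less_b (topspace Z)" and AZ: "A \<subseteq> topspace Z"
    and Pc: "\<And>n. countable (P n)" and Pne: "\<And>n. P n \<noteq> {}"
    and PA: "\<And>n. P n \<subseteq> A"
    and Pst: "\<And>n a. a \<in> A \<Longrightarrow> \<exists>p\<in>P n. \<exists>U\<in>\<U> n. a \<in> U \<and> p \<in> U"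
  shows "\<exists>F. (\<forall>n. finite (F n) \<and> F n \<subseteq> Z closure_of A) \<and>
             (\<forall>x\<in>A. \<forall>\<^sub>F n in sequentially. x \<in> star_of (F n) (\<U> n))"
proof -
  define e where "e n = from_nat_into (P n)" for n
  have rng: "range (e n) = P n" for n
    unfolding e_def using Pc Pne by (simp add: range_from_nat_into)
  define f where "f a n = (LEAST k. \<exists>U\<in>\<U> n. a \<in> U \<and> e n k \<in> U)" for a n
  have fex: "\<exists>U\<in>\<U> n. a \<in> U \<and> e n (f a n) \<in> U" if aA: "a \<in> A" for a n
  proof -
    obtain p U where "p \<in> P n" "U \<in> \<U> n" "a \<in> U" "p \<in> U" using Pst[OF aA] by blast
    then obtain k where "e n k = p" using rng by (metis rangeE)
    then have "\<exists>k. \<exists>U\<in>\<U> n. a \<in> U \<and> e n k \<in> U" using \<open>U \<in> \<U> n\<close> \<open>a \<in> U\<close> \<open>p \<in> U\<close> by blast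
    then show ?thesis unfolding f_def by (rule LeastI_ex)
  qed
  have "f ` A \<lesssim> topspace Z"
    using image_lepoll AZ subset_imp_lepoll lepoll_trans by blast
  then obtain g where g: "\<forall>h\<in>f ` A. \<forall>\<^sub>F n in sequentially. h n \<le> g n"
    using cb unfolding card_less_b_def le_star_bounded_def by blast
  define F where "F n = e n ` {..g n}" for n
  have "A \<subseteq> Z closure_of A" using AZ by (rule closure_of_subset)
  then have "finite (F n) \<and> F n \<subseteq> Z closure_of A" for n
    unfolding F_def using rng PA by blast
  moreover have "\<forall>\<^sub>F n in sequentially. x \<in> star_of (F n) (\<U> n)" if xA: "x \<in> A" for x
  proof -
    have "\<forall>\<^sub>F n in sequentially. f x n \<le> g n" using g xA by blast
    then show ?thesis
    proof (rule eventually_mono)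
      fix n assume "f x n \<le> g n"
      obtain U where "U \<in> \<U> n" "x \<in> U" "e n (f x n) \<in> U" using fex[OF xA] by blast
      moreover have "e n (f x n) \<in> F n" unfolding F_def using \<open>f x n \<le> g n\<close> by simp
      ultimately show "x \<in> star_of (F n) (\<U> n)" unfolding star_of_def by blast
    qed
  qed
  ultimately show ?thesis by blast
qed




lemma maximal_sep:
  assumes "A \<subseteq> \<Union>\<U>"
  shows "\<exists>P\<subseteq>A. (\<forall>U\<in>\<U>. \<forall>p\<in>P. \<forall>q\<in>P. p \<in> U \<longrightarrow> q \<in> U \<longrightarrow> p = q) \<and>
               (\<forall>a\<in>A. \<exists>p\<in>P. \<exists>U\<in>\<U>. a \<in> U \<and> p \<in> U)"
proof -
  define S where "S = {P. P \<subseteq> A \<and> (\<forall>U\<in>\<U>. \<forall>p\<in>P. \<forall>q\<in>P. p \<in> U \<longrightarrow> q \<in> U \<longrightarrow> p = q)}"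
  have "\<forall>C\<in>chains S. \<Union>C \<in> S"
  proof
    fix C assume C: "C \<in> chains S"
    then have CS: "C \<subseteq> S" and ch: "\<And>P Q. P \<in> C \<Longrightarrow> Q \<in> C \<Longrightarrow> P \<subseteq> Q \<or> Q \<subseteq> P"
      unfolding chains_def chain_subset_def by auto
    show "\<Union>C \<in> S" unfolding S_def
    proof (intro CollectI conjI ballI impI)
      show "\<Union>C \<subseteq> A" using CS unfolding S_def by auto
    next
      fix U p q assume U: "U \<in> \<U>" and p: "p \<in> \<Union>C" and q: "q \<in> \<Union>C" and "p \<in> U" "q \<in> U"
      then obtain P Q where "P \<in> C" "Q \<in> C" "p \<in> P" "q \<in> Q" by blast
      then obtain R where R: "R \<in> C" "p \<in> R" "q \<in> R" using ch by blast
      then have "R \<in> S" using CS by blast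
      then have "\<forall>U\<in>\<U>. \<forall>p\<in>R. \<forall>q\<in>R. p \<in> U \<longrightarrow> q \<in> U \<longrightarrow> p = q" unfolding S_def by simp
      then show "p = q" using R U \<open>p \<in> U\<close> \<open>q \<in> U\<close> by blast
    qed
  qed
  from Zorn_Lemma[OF this] obtain M where M: "M \<in> S" and max: "\<forall>X\<in>S. M \<subseteq> X \<longrightarrow> X = M"
    by blast
  have "\<exists>p\<in>M. \<exists>U\<in>\<U>. a \<in> U \<and> p \<in> U" if aA: "a \<in> A" for a
  proof (cases "a \<in> M")
    case True
    then show ?thesis using assms aA by blast
  next
    case False
    have MA: "M \<subseteq> A" and Msep: "\<forall>U\<in>\<U>. \<forall>p\<in>M. \<forall>q\<in>M. p \<in> U \<longrightarrow> q \<in> U \<longrightarrow> p = q"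
      using M unfolding S_def by auto
    have "insert a M \<noteq> M" using False by blast
    then have "insert a M \<notin> S" using max by (metis subset_insertI)
    moreover have "insert a M \<subseteq> A" using MA aA by blast
    ultimately have "\<not> (\<forall>U\<in>\<U>. \<forall>p\<in>insert a M. \<forall>q\<in>insert a M. p \<in> U \<longrightarrow> q \<in> U \<longrightarrow> p = q)"
      by (simp add: S_def)
    then obtain U p q where U: "U \<in> \<U>" "p \<in> insert a M" "q \<in> insert a M" "p \<in> U" "q \<in> U" "p \<noteq> q"
      by blast
    show ?thesis
    proof (cases "p = a")
      case True
      then have "q \<in> M" using U by blast
      then show ?thesis using U True by blast
    next
      case False
      then have "p \<in> M" using U by blast
      have "q = a" using Msep U \<open>p \<in> M\<close> by blast
      then show ?thesis using U \<open>p \<in> M\<close> by blast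
    qed
  qed
  moreover have "M \<subseteq> A \<and> (\<forall>U\<in>\<U>. \<forall>p\<in>M. \<forall>q\<in>M. p \<in> U \<longrightarrow> q \<in> U \<longrightarrow> p = q)"
    using M unfolding S_def by simp
  ultimately show ?thesis by (intro exI[of _ M]) simp
qed

lemma finite_le1: "(\<forall>p\<in>S. \<forall>q\<in>S. p = q) \<Longrightarrow> finite S"
proof (cases "S = {}")
  case False
  then obtain p where "p \<in> S" by blast
  assume "\<forall>p\<in>S. \<forall>q\<in>S. p = q"
  then have "S \<subseteq> {p}" using \<open>p \<in> S\<close> by blast
  then show ?thesis using finite_subset by blast
qed simp




lemma tube_finite:
  fixes X :: "'a topology" and Y :: "'b topology"
  assumes cY: "compact_space Y"
    and Uo: "\<forall>U\<in>\<U>. openin (prod_topology X Y) U"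
    and cov: "D \<subseteq> \<Union>\<U>" and Dc: "closedin (prod_topology X Y) D"
    and PD: "P \<subseteq> D"
    and sep: "\<forall>U\<in>\<U>. \<forall>p\<in>P. \<forall>q\<in>P. p \<in> U \<longrightarrow> q \<in> U \<longrightarrow> p = q"
    and z: "z \<in> topspace X"
  shows "\<exists>W. openin X W \<and> z \<in> W \<and> finite {p\<in>P. fst p \<in> W}"
proof -
  let ?Z = "prod_topology X Y"
  let ?K = "{z} \<times> topspace Y"
  have K: "compactin ?Z ?K"
    using cY z by (simp add: compactin_Times compact_space_def)
  have oC: "openin ?Z (topspace ?Z - D)" using Dc by (simp add: closedin_def)
  have ocov: "\<And>U. U \<in> insert (topspace ?Z - D) \<U> \<Longrightarrow> openin ?Z U" using Uo oC by blast
  have covK: "?K \<subseteq> \<Union>(insert (topspace ?Z - D) \<U>)" using cov z by auto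
  have "\<exists>\<F>. finite \<F> \<and> \<F> \<subseteq> insert (topspace ?Z - D) \<U> \<and> ?K \<subseteq> \<Union>\<F>"
    by (rule compactinD[OF K ocov covK])
  then obtain \<F> where F: "finite \<F>" "\<F> \<subseteq> insert (topspace ?Z - D) \<U>" "?K \<subseteq> \<Union>\<F>"
    by (elim exE conjE)
  have oF: "openin ?Z (\<Union>\<F>)" using F ocov by blast
  have "{z} \<times> topspace Y \<subseteq> \<Union>\<F>" using F by blast
  from tube_lemma_right[OF oF cY[unfolded compact_space_def] z this]
  obtain W V where WV: "openin X W" "openin Y V" "z \<in> W" "topspace Y \<subseteq> V" "W \<times> V \<subseteq> \<Union>\<F>"
    by blast
  have fin1: "finite (P \<inter> U)" if "U \<in> \<U>" for U
    using sep that by (intro finite_le1) blast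
  have sub: "{p\<in>P. fst p \<in> W} \<subseteq> \<Union>((\<lambda>U. P \<inter> U) ` (\<F> \<inter> \<U>))"
  proof
    fix p assume p: "p \<in> {p\<in>P. fst p \<in> W}"
    then have pD: "p \<in> D" and pW: "fst p \<in> W" using PD by auto
    have "D \<subseteq> topspace ?Z" using Dc closedin_subset by blast
    then have "snd p \<in> topspace Y" using pD by (auto simp: mem_Times_iff)
    then have "p \<in> W \<times> V" using pW WV(4) by (auto simp: mem_Times_iff)
    then obtain U where "U \<in> \<F>" "p \<in> U" using WV(5) by blast
    moreover have "U \<noteq> topspace ?Z - D" using pD \<open>p \<in> U\<close> by blast
    ultimately have "U \<in> \<F> \<inter> \<U>" using F(2) by blast
    then show "p \<in> \<Union>((\<lambda>U. P \<inter> U) ` (\<F> \<inter> \<U>))" using p \<open>p \<in> U\<close> by blast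
  qed
  have "finite (\<Union>((\<lambda>U. P \<inter> U) ` (\<F> \<inter> \<U>)))"
    using F(1) fin1 by (intro finite_UN_I) auto
  then have "finite {p\<in>P. fst p \<in> W}" using sub finite_subset by blast
  then show ?thesis using WV by blast
qed




lemma sep_countable:
  fixes X :: "'a topology" and Y :: "'b topology"
  assumes H: "set_strongly_star_hurewicz X" and cY: "compact_space Y" and t1X: "t1_space X"
    and Uo: "\<forall>U\<in>\<U>. openin (prod_topology X Y) U"
    and cov: "D \<subseteq> \<Union>\<U>" and Dc: "closedin (prod_topology X Y) D"
    and PD: "P \<subseteq> D"
    and sep: "\<forall>U\<in>\<U>. \<forall>p\<in>P. \<forall>q\<in>P. p \<in> U \<longrightarrow> q \<in> U \<longrightarrow> p = q"
  shows "countable P"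
proof -
  have "\<forall>z\<in>topspace X. \<exists>W. openin X W \<and> z \<in> W \<and> finite {p\<in>P. fst p \<in> W}"
    using tube_finite[OF cY Uo cov Dc PD sep] by blast
  from bchoice[OF this] obtain W where W0: "\<forall>z\<in>topspace X. openin X (W z) \<and> z \<in> W z \<and> finite {p\<in>P. fst p \<in> W z}"
    by (elim exE)
  have W: "openin X (W z) \<and> z \<in> W z \<and> finite {p\<in>P. fst p \<in> W z}" if "z \<in> topspace X" for z
    using W0 that by blast
  have DZ: "D \<subseteq> topspace X \<times> topspace Y" using Dc closedin_subset by fastforce
  define A' where "A' = fst ` P"
  have A'X: "A' \<subseteq> topspace X" unfolding A'_def using PD DZ by auto
  define W' where "W' z = W z - (fst ` {p\<in>P. fst p \<in> W z} - {z})" for z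
  have W'o: "openin X (W' z)" and zW': "z \<in> W' z" if z: "z \<in> topspace X" for z
  proof -
    have fin: "finite (fst ` {p\<in>P. fst p \<in> W z} - {z})" using W[OF z] by simp
    have "fst ` {p\<in>P. fst p \<in> W z} - {z} \<subseteq> topspace X" using A'X unfolding A'_def by blast
    then have "closedin X (fst ` {p\<in>P. fst p \<in> W z} - {z})"
      using t1X fin t1_space_closedin_finite by blast
    then show "openin X (W' z)" unfolding W'_def using W[OF z] by blast
    show "z \<in> W' z" unfolding W'_def using W[OF z] by blast
  qed
  have key: "x = z" if k1: "x \<in> A'" and k2: "x \<in> W' z" for x z
  proof (rule ccontr)
    assume "x \<noteq> z"
    obtain p where "p \<in> P" "x = fst p" using k1 unfolding A'_def by blast
    moreover have "x \<in> W z" using k2 unfolding W'_def by blast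
    ultimately have "x \<in> fst ` {p\<in>P. fst p \<in> W z} - {z}" using \<open>x \<noteq> z\<close> by blast
    then show False using k2 unfolding W'_def by blast
  qed
  have "countable A'"
  proof (cases "A' = {}")
    case True then show ?thesis by simp
  next
    case False
    define \<V> where "\<V> = (\<lambda>n::nat. W' ` topspace X)"
    have cl: "X closure_of A' \<subseteq> topspace X" by (rule closure_of_subset_topspace)
    have covV: "\<forall>n::nat. (\<forall>U\<in>\<V> n. openin X U) \<and> X closure_of A' \<subseteq> \<Union>(\<V> n)"
      unfolding \<V>_def using W'o zW' cl by blast
    have "\<exists>F. (\<forall>n. finite (F n) \<and> F n \<subseteq> X closure_of A') \<and>
             (\<forall>x\<in>A'. \<forall>\<^sub>F n in sequentially. x \<in> star_of (F n) (\<V> n))"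
      apply (rule H[unfolded set_strongly_star_hurewicz_def, rule_format])
      using False A'X covV by simp
    then obtain F where F0: "\<forall>n. finite (F n) \<and> F n \<subseteq> X closure_of A'"
      and ev0: "\<forall>x\<in>A'. \<forall>\<^sub>F n in sequentially. x \<in> star_of (F n) (\<V> n)"
      by (elim exE conjE)
    have F: "finite (F n) \<and> F n \<subseteq> X closure_of A'" for n using F0 by blast
    have ev: "\<forall>\<^sub>F n in sequentially. x \<in> star_of (F n) (\<V> n)" if "x \<in> A'" for x using ev0 that by blast
    have "A' \<subseteq> (\<Union>n. F n)"
    proof
      fix x assume xA: "x \<in> A'"
      obtain N where N: "\<forall>n\<ge>N. x \<in> star_of (F n) (\<V> n)"
        using ev[OF xA] unfolding eventually_sequentially by (elim exE)
      define n where "n = N"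
      have n: "x \<in> star_of (F n) (\<V> n)" using N n_def by simp
      then obtain V where V: "V \<in> \<V> n" "x \<in> V" "V \<inter> F n \<noteq> {}" unfolding star_of_def by blast
      then obtain z where z: "z \<in> topspace X" "V = W' z" unfolding \<V>_def by blast
      have xz: "x = z" using key xA V(2) z(2) by blast
      obtain e where e: "e \<in> F n" "e \<in> W' x" using V z xz by blast
      have ecl: "e \<in> X closure_of A'" using F e(1) by blast
      then have eX: "e \<in> topspace X" using cl by blast
      have "\<exists>y. y \<in> A' \<and> y \<in> W' e"
        using ecl W'o[OF eX] zW'[OF eX] unfolding in_closure_of by blast
      then obtain y where "y \<in> A'" "y \<in> W' e" by blast
      then have "y = e" using key by blast
      then have "e \<in> A'" using \<open>y \<in> A'\<close> by simp
      then have "e = x" using key e(2) by blast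
      then show "x \<in> (\<Union>n. F n)" using e(1) by blast
    qed
    moreover have "countable (\<Union>n. F n)" using F by (intro countable_UN) (auto intro: countable_finite)
    ultimately show ?thesis using countable_subset by blast
  qed
  moreover have "P \<subseteq> (\<Union>x\<in>A'. {p\<in>P. fst p \<in> W x})"
  proof
    fix p assume "p \<in> P"
    then have "fst p \<in> A'" "fst p \<in> topspace X" unfolding A'_def using A'X A'_def by auto
    then show "p \<in> (\<Union>x\<in>A'. {p\<in>P. fst p \<in> W x})" using W \<open>p \<in> P\<close> by blast
  qed
  moreover have "countable (\<Union>x\<in>A'. {p\<in>P. fst p \<in> W x})"
    using calculation(1) W A'X by (intro countable_UN) (auto intro: countable_finite)
  ultimately show ?thesis using countable_subset by blast
qed




theorem proposition4p6:
  fixes X :: "'a topology" and Y :: "'b topology"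
  assumes "set_strongly_star_hurewicz X"
    and "compact_space Y"
    and "t1_space (prod_topology X Y)"
    and "card_less_b (topspace (prod_topology X Y))"
  shows "set_strongly_star_hurewicz (prod_topology X Y)"
  unfolding set_strongly_star_hurewicz_def
proof (intro allI impI, elim conjE)
  fix A :: "('a \<times> 'b) set" and \<U> :: "nat \<Rightarrow> ('a \<times> 'b) set set"
  let ?Z = "prod_topology X Y"
  assume Ane: "A \<noteq> {}" and AZ: "A \<subseteq> topspace ?Z"
    and cov: "\<forall>n. (\<forall>U\<in>\<U> n. openin ?Z U) \<and> ?Z closure_of A \<subseteq> \<Union>(\<U> n)"
  have "topspace ?Z \<noteq> {}" using Ane AZ by blast
  then have "?Z \<noteq> trivial_topology" by simp
  then have t1X: "t1_space X" using assms(3) t1_space_prod_topology by blast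
  have Acl: "A \<subseteq> ?Z closure_of A" using AZ by (rule closure_of_subset)
  have "\<forall>n. \<exists>P. P \<subseteq> A \<and> (\<forall>U\<in>\<U> n. \<forall>p\<in>P. \<forall>q\<in>P. p \<in> U \<longrightarrow> q \<in> U \<longrightarrow> p = q) \<and>
               (\<forall>a\<in>A. \<exists>p\<in>P. \<exists>U\<in>\<U> n. a \<in> U \<and> p \<in> U)"
  proof
    fix n
    have "A \<subseteq> \<Union>(\<U> n)" using Acl cov by blast
    from maximal_sep[OF this] show "\<exists>P. P \<subseteq> A \<and> (\<forall>U\<in>\<U> n. \<forall>p\<in>P. \<forall>q\<in>P. p \<in> U \<longrightarrow> q \<in> U \<longrightarrow> p = q) \<and>
               (\<forall>a\<in>A. \<exists>p\<in>P. \<exists>U\<in>\<U> n. a \<in> U \<and> p \<in> U)" by blast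
  qed
  from choice[OF this] obtain P where P: "\<forall>n. P n \<subseteq> A \<and> (\<forall>U\<in>\<U> n. \<forall>p\<in>P n. \<forall>q\<in>P n. p \<in> U \<longrightarrow> q \<in> U \<longrightarrow> p = q) \<and>
               (\<forall>a\<in>A. \<exists>p\<in>P n. \<exists>U\<in>\<U> n. a \<in> U \<and> p \<in> U)"
    by (elim exE)
  have PA: "P n \<subseteq> A" for n using P by blast
  have Pst: "\<exists>p\<in>P n. \<exists>U\<in>\<U> n. a \<in> U \<and> p \<in> U" if aA: "a \<in> A" for n a
  proof -
    have "\<forall>a\<in>A. \<exists>p\<in>P n. \<exists>U\<in>\<U> n. a \<in> U \<and> p \<in> U"
      using conjunct2[OF conjunct2[OF spec[OF P, of n]]] .
    then show ?thesis using aA by (rule bspec)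
  qed
  have Pc: "countable (P n)" for n
  proof (rule sep_countable[OF assms(1) assms(2) t1X])
    show "\<forall>U\<in>\<U> n. openin ?Z U" using cov by blast
    show "?Z closure_of A \<subseteq> \<Union>(\<U> n)" using cov by blast
    show "closedin ?Z (?Z closure_of A)" by simp
    show "P n \<subseteq> ?Z closure_of A" using PA Acl by blast
    show "\<forall>U\<in>\<U> n. \<forall>p\<in>P n. \<forall>q\<in>P n. p \<in> U \<longrightarrow> q \<in> U \<longrightarrow> p = q" using P by blast
  qed
  have Pne: "P n \<noteq> {}" for n
  proof -
    obtain a where "a \<in> A" using Ane by blast
    then show ?thesis using Pst by blast
  qed
  show "\<exists>F. (\<forall>n. finite (F n) \<and> F n \<subseteq> ?Z closure_of A) \<and>
             (\<forall>x\<in>A. \<forall>\<^sub>F n in sequentially. x \<in> star_of (F n) (\<U> n))"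
    by (rule diag_lemma[OF assms(4) AZ Pc Pne PA Pst])
qed


end
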